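(* Let $f:[a,b]\to\mathbb{C}$ be continuous and write $f=g+ih$ with $g,h:[a,b]\to\mathbb{R}$ its real and imaginary parts. Then: (1) $\dim_H(G(g+ih))\ge \max\{\dim_H(G(g)),\dim_H(G(h))\}$; (2) if $h$ is Lipschitz, then $\dim_H(G(g+ih))=\dim_H(G(g))$.
   Context: For a function $u$ on $[a,b]$, $G(u)=\{(x,u(x)):x\in[a,b]\}$ denotes its graph; for complex-valued $u$ the graph is regarded as a subset of $\mathbb{R}\times\mathbb{C}\cong\mathbb{R}^3$ with the Euclidean metric, for real-valued $u$ as a subset of $\mathbb{R}^2$. $\dim_H$ denotes Hausdorff dimension. *)

theory Defs
  imports "HOL-Analysis.Analysis"
begin

definition graph_on :: "real \<Rightarrow> real \<Rightarrow> (real \<Rightarrow> 'b) \<Rightarrow> (real \<times> 'b) set" where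
  "graph_on a b u = {(x, u x) | x. x \<in> {a..b}}"

definition hausdorff_pre :: "real \<Rightarrow> real \<Rightarrow> 'a::metric_space set \<Rightarrow> ennreal" where
  "hausdorff_pre s \<delta> A =
     (INF U \<in> {U :: nat \<Rightarrow> 'a set. A \<subseteq> (\<Union>i. U i) \<and>
                 (\<forall>i. bounded (U i) \<and> diameter (U i) \<le> \<delta>)}.
        (\<Sum>i. ennreal (diameter (U i) powr s)))"

definition hausdorff_measure :: "real \<Rightarrow> 'a::metric_space set \<Rightarrow> ennreal" where
  "hausdorff_measure s A = (SUP \<delta> \<in> {0<..}. hausdorff_pre s \<delta> A)"

definition hausdorff_dim :: "'a::metric_space set \<Rightarrow> real" where
  "hausdorff_dim A = Inf {s. 0 < s \<and> hausdorff_measure s A = 0}"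

end

theory Submission
  imports Defs
begin

lemma diam_le_metric:
  assumes "0 \<le> d" "\<And>x y. x \<in> S \<Longrightarrow> y \<in> S \<Longrightarrow> dist x y \<le> d"
  shows "diameter S \<le> d"
proof (cases "S = {}")
  case True thus ?thesis using assms by (simp add: diameter_def)
next
  case False
  show ?thesis unfolding diameter_def using False
    by (auto intro!: cSUP_least assms)
qed

lemma pre_le:
  assumes "A \<subseteq> (\<Union>i. U i)" "\<And>i. bounded (U i)" "\<And>i. diameter (U i) \<le> \<delta>"
  shows "hausdorff_pre s \<delta> A \<le> (\<Sum>i. ennreal (diameter (U i) powr s))"
  unfolding hausdorff_pre_def using assms by (intro INF_lower) auto

lemma hm_zeroD:
  assumes "hausdorff_measure s A = 0" "\<delta> > 0"
  shows "hausdorff_pre s \<delta> A = 0"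
proof -
  have "hausdorff_pre s \<delta> A \<le> hausdorff_measure s A"
    unfolding hausdorff_measure_def using assms(2) by (intro SUP_upper) auto
  thus ?thesis using assms(1) by simp
qed

lemma hm_zeroI:
  assumes "\<And>\<delta>. \<delta> > 0 \<Longrightarrow> hausdorff_pre s \<delta> A = 0"
  shows "hausdorff_measure s A = 0"
  unfolding hausdorff_measure_def using assms by simp

lemma pre_zeroI:
  assumes "\<And>e. e > 0 \<Longrightarrow> hausdorff_pre s \<delta> A \<le> ennreal e"
  shows "hausdorff_pre s \<delta> A = 0"
proof -
  have "hausdorff_pre s \<delta> A \<le> 0 + 0"
    by (rule ennreal_le_epsilon) (use assms in simp)
  thus ?thesis by simp
qed

lemma lip_zero:
  fixes \<phi> :: "'a::metric_space \<Rightarrow> 'b::metric_space"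
  assumes s: "s > 0" and K: "K \<ge> 0"
    and lip: "\<And>x y. x \<in> A \<Longrightarrow> y \<in> A \<Longrightarrow> dist (\<phi> x) (\<phi> y) \<le> K * dist x y"
    and A0: "hausdorff_measure s A = 0"
  shows "hausdorff_measure s (\<phi> ` A) = 0"
proof (rule hm_zeroI, rule pre_zeroI)
  fix \<delta> e :: real assume d: "\<delta> > 0" and e: "e > 0"
  define K' where "K' = K + 1"
  have K': "K' > 0" using K by (simp add: K'_def)
  define d' where "d' = \<delta> / K'"
  have d': "d' > 0" using d K' by (simp add: d'_def)
  have kp: "K' powr s > 0" using K' by simp
  have "hausdorff_pre s d' A < ennreal (e / K' powr s)"
    using hm_zeroD[OF A0 d'] e kp by simp
  then obtain U where U: "A \<subseteq> (\<Union>i. U i)" "\<And>i. bounded (U i)" "\<And>i. diameter (U i) \<le> d'"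
    and sumU: "(\<Sum>i. ennreal (diameter (U i) powr s)) < ennreal (e / K' powr s)"
    unfolding hausdorff_pre_def INF_less_iff by blast
  define V where "V i = \<phi> ` (U i \<inter> A)" for i
  have distV: "dist x y \<le> K' * diameter (U i)" if xy: "x \<in> V i" "y \<in> V i" for x y i
  proof -
    obtain p q where pq: "p \<in> U i" "p \<in> A" "q \<in> U i" "q \<in> A" "x = \<phi> p" "y = \<phi> q"
      using xy by (auto simp: V_def)
    have "dist x y \<le> K * dist p q" using lip pq by auto
    also have "\<dots> \<le> K' * dist p q" by (simp add: K'_def mult_right_mono)
    also have "\<dots> \<le> K' * diameter (U i)"
      using diameter_bounded_bound[OF U(2) pq(1) pq(3)] K' by simp
    finally show ?thesis .
  qed
  have dge: "0 \<le> K' * diameter (U i)" for i using diameter_ge_0[OF U(2)] K' by simp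
  have diamV: "diameter (V i) \<le> K' * diameter (U i)" for i
    by (rule diam_le_metric[OF dge distV])
  have bV: "bounded (V i)" for i
  proof (cases "V i = {}")
    case True thus ?thesis by simp
  next
    case False
    then obtain x where "x \<in> V i" by blast
    thus ?thesis unfolding bounded_def using distV by blast
  qed
  have coverV: "\<phi> ` A \<subseteq> (\<Union>i. V i)" using U(1) unfolding V_def by blast
  have diamVd: "diameter (V i) \<le> \<delta>" for i
  proof -
    have "K' * diameter (U i) \<le> K' * d'" using U(3) K' by simp
    also have "\<dots> = \<delta>" using K' by (simp add: d'_def)
    finally show ?thesis using diamV[of i] by simp
  qed
  have "hausdorff_pre s \<delta> (\<phi> ` A) \<le> (\<Sum>i. ennreal (diameter (V i) powr s))"
    by (rule pre_le[OF coverV bV diamVd])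
  also have "\<dots> \<le> (\<Sum>i. ennreal (K' powr s) * ennreal (diameter (U i) powr s))"
  proof (rule suminf_le)
    fix i
    have "diameter (V i) powr s \<le> (K' * diameter (U i)) powr s"
      using diamV diameter_ge_0[OF bV] s by (intro powr_mono2) auto
    also have "\<dots> = K' powr s * diameter (U i) powr s"
      using K' diameter_ge_0[OF U(2)] by (simp add: powr_mult)
    finally show "ennreal (diameter (V i) powr s) \<le> ennreal (K' powr s) * ennreal (diameter (U i) powr s)"
      by (simp add: ennreal_mult[symmetric] ennreal_leI)
  qed auto
  also have "\<dots> = ennreal (K' powr s) * (\<Sum>i. ennreal (diameter (U i) powr s))" by simp
  also have "\<dots> \<le> ennreal (K' powr s) * ennreal (e / K' powr s)"
    using sumU by (intro mult_left_mono) auto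
  also have "\<dots> = ennreal e" using kp e by (simp add: ennreal_mult[symmetric])
  finally show "hausdorff_pre s \<delta> (\<phi> ` A) \<le> ennreal e" .
qed


lemma arith_bound:
  fixes x R e :: real
  assumes x: "x \<ge> 1" and R: "R > 0" and e: "e > 0" and big: "165888 * R^4 / e < x"
  shows "(x + 1)^3 * (6 * (2 * R / x))^4 \<le> e"
proof -
  have x0: "x > 0" using x by simp
  have "(x + 1)^3 \<le> (2*x)^3" using x by (intro power_mono) auto
  hence h1: "(x + 1)^3 \<le> 8 * x^3" by (simp add: power_mult_distrib)
  have h2: "(6 * (2 * R / x))^4 = 20736 * R^4 / x^4" by (simp add: power_divide power_mult_distrib)
  have "(x + 1)^3 * (6 * (2 * R / x))^4 \<le> 8 * x^3 * (20736 * R^4 / x^4)"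
    unfolding h2 using h1 R x0 by (intro mult_right_mono) auto
  also have "\<dots> = 165888 * R^4 / x" using x0 by (simp add: field_simps power_eq_if)
  also have "\<dots> \<le> e" using big x0 e by (simp add: field_simps)
  finally show ?thesis .
qed

lemma grid:
  fixes t R :: real and n :: nat
  assumes "n \<ge> 1" "R > 0" "\<bar>t\<bar> \<le> R"
  shows "\<exists>j<n+1. \<bar>t - (- R + real j * (2 * R / n))\<bar> \<le> 2 * R / n"
proof -
  define w where "w = 2 * R / n"
  have w: "w > 0" using assms by (simp add: w_def)
  define j where "j = nat \<lfloor>(t + R) / w\<rfloor>"
  have nn: "(t + R) / w \<ge> 0" using assms w by simp
  have j: "real j = of_int \<lfloor>(t + R) / w\<rfloor>" using nn by (simp add: j_def)
  have lo: "real j \<le> (t + R) / w" using j by linarith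
  have hi: "(t + R) / w < real j + 1" using j by linarith
  have "(t + R) / w \<le> n" using assms w by (simp add: w_def field_simps)
  hence "real j \<le> n" using lo by linarith
  hence jn: "j < n + 1" by simp
  have "real j * w \<le> t + R" using lo w by (simp add: field_simps)
  moreover have "t + R < (real j + 1) * w" using hi w by (simp add: field_simps)
  ultimately have "\<bar>t - (- R + real j * w)\<bar> \<le> w" by (simp add: algebra_simps)
  thus ?thesis using jn unfolding w_def by blast
qed


lemma bounded_zero4:
  fixes A :: "(real \<times> complex) set"
  assumes "bounded A"
  shows "hausdorff_measure 4 A = 0"
proof (rule hm_zeroI, rule pre_zeroI)
  fix \<delta> e :: real assume d: "\<delta> > 0" and e: "e > 0"
  obtain R where R: "R > 0" and AR: "\<And>p. p \<in> A \<Longrightarrow> norm p \<le> R"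
    using assms bounded_pos by blast
  obtain n :: nat where n: "max (12 * R / \<delta>) (165888 * R^4 / e) < real n"
    using reals_Archimedean2 by blast
  have "0 < 12 * R / \<delta>" using R d by simp
  hence "0 < real n" using n by linarith
  hence n1: "n \<ge> 1" by simp
  define w where "w = 2 * R / n"
  have w: "w > 0" using R n1 by (simp add: w_def)
  define m where "m = n + 1"
  define c where "c j k l = (- R + real j * w, Complex (- R + real k * w) (- R + real l * w))" for j k l :: nat
  define U where "U i = (if i < m^3 then cball (c (i mod m) (i div m mod m) (i div m div m)) (3 * w) else {})" for i
  have cover: "A \<subseteq> (\<Union>i. U i)"
  proof
    fix p assume p: "p \<in> A"
    obtain x z where pxz: "p = (x, z)" by fastforce
    have "norm x \<le> R" using AR[OF p] pxz by (metis norm_fst_le order_trans fst_conv)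
    hence ax: "\<bar>x\<bar> \<le> R" by simp
    have nz: "norm z \<le> R" using AR[OF p] pxz by (metis norm_snd_le order_trans snd_conv)
    have ay: "\<bar>Re z\<bar> \<le> R" using nz abs_Re_le_cmod order_trans by blast
    have az: "\<bar>Im z\<bar> \<le> R" using nz abs_Im_le_cmod order_trans by blast
    obtain j where j: "j < m" "\<bar>x - (- R + real j * w)\<bar> \<le> w"
      using grid[OF n1 R ax] unfolding w_def m_def by blast
    obtain k where k: "k < m" "\<bar>Re z - (- R + real k * w)\<bar> \<le> w"
      using grid[OF n1 R ay] unfolding w_def m_def by blast
    obtain l where l: "l < m" "\<bar>Im z - (- R + real l * w)\<bar> \<le> w"
      using grid[OF n1 R az] unfolding w_def m_def by blast
    define i where "i = j + m * (k + m * l)"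
    have "k + m * l \<le> (m - 1) + m * (m - 1)" using k l
      by (intro add_mono mult_left_mono) auto
    also have "\<dots> = m * m - 1" using j by (cases m) (auto simp: algebra_simps)
    moreover have "0 < m * m" using j by simp
    ultimately have "k + m * l < m * m" by linarith
    hence "k + m * l + 1 \<le> m * m" by simp
    hence "m * (k + m * l + 1) \<le> m * (m * m)" by (intro mult_left_mono) auto
    hence ilt: "i < m^3" using j unfolding i_def by (simp add: power3_eq_cube algebra_simps)
    have dec: "i mod m = j" "i div m mod m = k" "i div m div m = l"
      using j k l unfolding i_def by auto
    have "dist p (c j k l) \<le> 3 * w"
    proof -
      have "dist p (c j k l) = sqrt ((dist x (- R + real j * w))^2 + (dist z (Complex (- R + real k * w) (- R + real l * w)))^2)"
        unfolding pxz c_def by (simp add: dist_Pair_Pair)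
      also have "\<dots> \<le> \<bar>dist x (- R + real j * w)\<bar> + \<bar>dist z (Complex (- R + real k * w) (- R + real l * w))\<bar>"
        by (rule sqrt_sum_squares_le_sum_abs)
      also have "\<dots> = \<bar>x - (- R + real j * w)\<bar> + cmod (z - Complex (- R + real k * w) (- R + real l * w))"
        by (simp add: dist_real_def dist_norm)
      also have "cmod (z - Complex (- R + real k * w) (- R + real l * w)) \<le> \<bar>Re z - (- R + real k * w)\<bar> + \<bar>Im z - (- R + real l * w)\<bar>"
        using cmod_le[of "z - Complex (- R + real k * w) (- R + real l * w)"] by simp
      finally show ?thesis using j k l by linarith
    qed
    hence "p \<in> U i" unfolding U_def using ilt dec by (simp add: dist_commute)
    thus "p \<in> (\<Union>i. U i)" by blast
  qed
  have bU: "bounded (U i)" for i by (simp add: U_def)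
  have dU: "diameter (U i) = (if i < m^3 then 6 * w else 0)" for i
    using w by (simp add: U_def)
  have dUd: "diameter (U i) \<le> \<delta>" for i
  proof -
    have "12 * R / \<delta> < n" using n by simp
    hence "12 * R < n * \<delta>" using d by (simp add: field_simps)
    hence "6 * w \<le> \<delta>" using n1 unfolding w_def by (simp add: field_simps)
    thus ?thesis using dU d by simp
  qed
  have "hausdorff_pre 4 \<delta> A \<le> (\<Sum>i. ennreal (diameter (U i) powr 4))"
    by (rule pre_le[OF cover bU dUd])
  also have "\<dots> = (\<Sum>i<m^3. ennreal (diameter (U i) powr 4))"
    by (rule suminf_finite) (auto simp: dU)
  also have "\<dots> = (\<Sum>i<m^3. ennreal ((6 * w) ^ 4))"
    using w by (intro sum.cong) (auto simp: dU)
  also have "\<dots> = ennreal (real (m^3) * (6 * w) ^ 4)"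
    by (simp add: ennreal_mult ennreal_of_nat_eq_real_of_nat)
  also have "\<dots> \<le> ennreal e"
  proof (rule ennreal_leI)
    have "(real n + 1)^3 * (6 * (2 * R / real n))^4 \<le> e"
      using arith_bound[OF _ R e] n1 n by simp
    thus "real (m^3) * (6 * w) ^ 4 \<le> e" unfolding m_def w_def by (simp add: add.commute)
  qed
  finally show "hausdorff_pre 4 \<delta> A \<le> ennreal e" .
qed


definition S :: "'a::metric_space set \<Rightarrow> real set" where
  "S A = {s. 0 < s \<and> hausdorff_measure s A = 0}"

lemma graph_image: "graph_on a b u = (\<lambda>x. (x, u x)) ` {a..b}"
  unfolding graph_on_def by auto

lemma dim_mono:
  assumes "4 \<in> {s. 0 < s \<and> hausdorff_measure s A = 0}"
    and "{s. 0 < s \<and> hausdorff_measure s A = 0} \<subseteq> {s. 0 < s \<and> hausdorff_measure s B = 0}"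
  shows "hausdorff_dim B \<le> hausdorff_dim A"
  unfolding hausdorff_dim_def
  by (rule cInf_superset_mono) (use assms in \<open>auto intro: bdd_belowI[where m=0]\<close>)

lemma proj_lip:
  fixes \<pi> :: "complex \<Rightarrow> real"
  assumes "\<And>z w. \<bar>\<pi> z - \<pi> w\<bar> \<le> cmod (z - w)"
  shows "dist (fst p, \<pi> (snd p)) (fst q, \<pi> (snd q)) \<le> 1 * dist p q"
proof -
  obtain x z y w where pq: "p = (x, z)" "q = (y, w)" by fastforce
  have "(dist (\<pi> z) (\<pi> w))^2 \<le> (dist z w)^2"
  proof -
    have "\<bar>\<pi> z - \<pi> w\<bar>^2 \<le> (cmod (z - w))^2"
      using assms[of z w] by (intro power_mono) auto
    thus ?thesis by (simp add: dist_real_def dist_norm)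
  qed
  hence "sqrt ((dist x y)^2 + (dist (\<pi> z) (\<pi> w))^2) \<le> sqrt ((dist x y)^2 + (dist z w)^2)"
    by simp
  thus ?thesis unfolding pq by (simp add: dist_Pair_Pair)
qed

theorem mainTheorem1:
  fixes f :: "real \<Rightarrow> complex" and a b :: real
  assumes "a < b"
    and "continuous_on {a..b} f"
  shows "(hausdorff_dim (graph_on a b f) \<ge>
           max (hausdorff_dim (graph_on a b (\<lambda>x. Re (f x))))
               (hausdorff_dim (graph_on a b (\<lambda>x. Im (f x)))))
         \<and> ((\<exists>L. L-lipschitz_on {a..b} (\<lambda>x. Im (f x))) \<longrightarrow>
           hausdorff_dim (graph_on a b f) = hausdorff_dim (graph_on a b (\<lambda>x. Re (f x))))"
proof -
  define Gf where "Gf = graph_on a b f"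
  define Gg where "Gg = graph_on a b (\<lambda>x. Re (f x))"
  define Gh where "Gh = graph_on a b (\<lambda>x. Im (f x))"
  have "compact Gf" unfolding Gf_def graph_image
    by (intro compact_continuous_image continuous_on_Pair continuous_on_id assms(2)) auto
  hence "bounded Gf" by (rule compact_imp_bounded)
  hence four: "4 \<in> S Gf" unfolding S_def using bounded_zero4 by simp
  have Gg_img: "Gg = (\<lambda>p. (fst p, Re (snd p))) ` Gf"
    unfolding Gg_def Gf_def graph_image image_image by simp
  have Gh_img: "Gh = (\<lambda>p. (fst p, Im (snd p))) ` Gf"
    unfolding Gh_def Gf_def graph_image image_image by simp
  have Sg: "S Gf \<subseteq> S Gg"
  proof
    fix s assume "s \<in> S Gf"
    hence s: "s > 0" "hausdorff_measure s Gf = 0" by (auto simp: S_def)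
    have "hausdorff_measure s ((\<lambda>p. (fst p, Re (snd p))) ` Gf) = 0"
      by (rule lip_zero[OF s(1) _ _ s(2), of 1]) (simp, rule proj_lip, metis abs_Re_le_cmod minus_complex.sel)
    thus "s \<in> S Gg" using s by (simp add: S_def Gg_img)
  qed
  have Sh: "S Gf \<subseteq> S Gh"
  proof
    fix s assume "s \<in> S Gf"
    hence s: "s > 0" "hausdorff_measure s Gf = 0" by (auto simp: S_def)
    have "hausdorff_measure s ((\<lambda>p. (fst p, Im (snd p))) ` Gf) = 0"
      by (rule lip_zero[OF s(1) _ _ s(2), of 1]) (simp, rule proj_lip, metis abs_Im_le_cmod minus_complex.sel)
    thus "s \<in> S Gh" using s by (simp add: S_def Gh_img)
  qed
  have part1: "hausdorff_dim Gg \<le> hausdorff_dim Gf" "hausdorff_dim Gh \<le> hausdorff_dim Gf"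
    using dim_mono four Sg Sh unfolding S_def by blast+
  have part2: "hausdorff_dim Gf = hausdorff_dim Gg" if L: "L-lipschitz_on {a..b} (\<lambda>x. Im (f x))" for L
  proof -
    have L0: "L \<ge> 0" and Lb: "\<And>x y. x \<in> {a..b} \<Longrightarrow> y \<in> {a..b} \<Longrightarrow> dist (Im (f x)) (Im (f y)) \<le> L * dist x y"
      using L unfolding lipschitz_on_def by auto
    define Q where "Q p = (fst p, Complex (snd p) (Im (f (fst p))))" for p :: "real \<times> real"
    have Gf_img: "Gf = Q ` Gg"
      unfolding Gg_def Gf_def graph_image image_image Q_def by (simp add: complex_eq)
    have Qlip: "dist (Q p) (Q q) \<le> (2 + L) * dist p q" if pq: "p \<in> Gg" "q \<in> Gg" for p q
    proof -
      obtain x y where xy: "x \<in> {a..b}" "y \<in> {a..b}" "p = (x, Re (f x))" "q = (y, Re (f y))"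
        using pq unfolding Gg_def graph_on_def by auto
      have dx: "\<bar>x - y\<bar> \<le> dist p q" unfolding xy dist_Pair_Pair dist_real_def
        using real_sqrt_ge_abs1[of "x - y" "Re (f x) - Re (f y)"] by simp
      have dg: "\<bar>Re (f x) - Re (f y)\<bar> \<le> dist p q" unfolding xy dist_Pair_Pair dist_real_def
        using real_sqrt_ge_abs1[of "Re (f x) - Re (f y)" "x - y"] by (simp add: add.commute)
      have dh: "\<bar>Im (f x) - Im (f y)\<bar> \<le> L * \<bar>x - y\<bar>" using Lb[OF xy(1,2)] by (simp add: dist_real_def)
      have "dist (Q p) (Q q) = sqrt ((dist x y)^2 + (dist (Complex (Re (f x)) (Im (f x))) (Complex (Re (f y)) (Im (f y))))^2)"
        unfolding Q_def xy by (simp add: dist_Pair_Pair)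
      also have "\<dots> \<le> \<bar>dist x y\<bar> + \<bar>dist (Complex (Re (f x)) (Im (f x))) (Complex (Re (f y)) (Im (f y)))\<bar>"
        by (rule sqrt_sum_squares_le_sum_abs)
      also have "\<dots> \<le> \<bar>x - y\<bar> + (\<bar>Re (f x) - Re (f y)\<bar> + \<bar>Im (f x) - Im (f y)\<bar>)"
        using cmod_le[of "f x - f y"] by (simp add: dist_real_def dist_norm complex_eq)
      also have "\<dots> \<le> dist p q + (dist p q + L * dist p q)"
        using dx dg dh mult_left_mono[OF dx L0] by linarith
      finally show ?thesis by (simp add: algebra_simps)
    qed
    have "S Gg \<subseteq> S Gf"
    proof
      fix s assume "s \<in> S Gg"
      hence s: "s > 0" "hausdorff_measure s Gg = 0" by (auto simp: S_def)
      have "hausdorff_measure s (Q ` Gg) = 0"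
        by (rule lip_zero[OF s(1) _ Qlip s(2)]) (use L0 in auto)
      thus "s \<in> S Gf" using s by (simp add: S_def Gf_img)
    qed
    hence "S Gf = S Gg" using Sg by blast
    thus ?thesis unfolding hausdorff_dim_def S_def by simp
  qed
  show ?thesis using part1 part2 unfolding Gf_def Gg_def Gh_def by auto
qed

end
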